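(* For every function $f:\mathcal X\times\mathcal Y\to\mathcal Z$ and $\epsilon,\delta\in(0,1)$, $\mathrm{srec}_{\epsilon,\delta}(f)=\max_\mu \mathrm{srec}^\mu_{\epsilon,\delta}(f)$, where the maximum is over probability distributions $\mu$ on $\mathcal X\times\mathcal Y$.
   Context: A rectangle is $A\times B$ with $A\subseteq\mathcal X,B\subseteq\mathcal Y$. For $z\in\mathcal Z$, $\mathrm{srec}^z_{\epsilon,\delta}(f)$ is the optimal value of the LP: minimize $\sum_R w_R$ over $w_R\ge 0$ (one variable per rectangle $R$) subject to $\sum_{R\ni(x,y)}w_R\ge1-\epsilon$ for all $(x,y)\in f^{-1}(z)$; $\sum_{R\ni(x,y)}w_R\le\delta$ for all $(x,y)\notin f^{-1}(z)$; $\sum_{R\ni(x,y)}w_R\le1$ for all $(x,y)$. $\mathrm{srec}_{\epsilon,\delta}(f)=\max_z\mathrm{srec}^z_{\epsilon,\delta}(f)$. For a nonnegative function $\mu$ on $\mathcal X\times\mathcal Y$, write $\mu_z(R)=\mu(R\cap f^{-1}(z))$ and $\mu_z=\mu_z(\mathcal X\times\mathcal Y)$. $\mathrm{srec}^{z,\mu}_{\epsilon,\delta}(f)$ is the optimal value of the LP: minimize $\sum_R w_R$ over $w_R\ge0$ subject to the covering constraint $\sum_{(x,y)\in f^{-1}(z)}\mu(x,y)\sum_{R\ni(x,y)}w_R\ge(1-\epsilon)\mu_z$, the packing constraints $\sum_{R\ni(x,y)}w_R\le\delta$ for all $(x,y)\notin f^{-1}(z)$, and $\sum_{R\ni(x,y)}w_R\le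 1$ for all $(x,y)$. $\mathrm{srec}^\mu_{\epsilon,\delta}(f)=\max_z\mathrm{srec}^{z,\mu}_{\epsilon,\delta}(f)$. *)

theory Defs
  imports Complex_Main
begin

definition rects :: "('x \<times> 'y) set set" where
  "rects = {A \<times> B | A B. True}"

definition cov :: "(('x \<times> 'y) set \<Rightarrow> real) \<Rightarrow> 'x \<times> 'y \<Rightarrow> real" where
  "cov w p = (\<Sum>R\<in>{R\<in>rects. p \<in> R}. w R)"

definition srec_feasible ::
  "real \<Rightarrow> real \<Rightarrow> ('x \<times> 'y \<Rightarrow> 'z) \<Rightarrow> 'z \<Rightarrow> (('x \<times> 'y) set \<Rightarrow> real) \<Rightarrow> bool" where
  "srec_feasible eps delta f z w \<longleftrightarrow>
     (\<forall>R\<in>rects. 0 \<le> w R) \<and>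
     (\<forall>p. f p = z \<longrightarrow> 1 - eps \<le> cov w p) \<and>
     (\<forall>p. f p \<noteq> z \<longrightarrow> cov w p \<le> delta) \<and>
     (\<forall>p. cov w p \<le> 1)"

definition srec_z :: "real \<Rightarrow> real \<Rightarrow> ('x \<times> 'y \<Rightarrow> 'z) \<Rightarrow> 'z \<Rightarrow> real" where
  "srec_z eps delta f z = Inf {(\<Sum>R\<in>rects. w R) | w. srec_feasible eps delta f z w}"

definition srec :: "real \<Rightarrow> real \<Rightarrow> ('x \<times> 'y \<Rightarrow> 'z) \<Rightarrow> real" where
  "srec eps delta f = Sup (range (\<lambda>z. srec_z eps delta f z))"

definition mu_z :: "('x \<times> 'y \<Rightarrow> real) \<Rightarrow> ('x \<times> 'y \<Rightarrow> 'z) \<Rightarrow> 'z \<Rightarrow> real" where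
  "mu_z \<mu> f z = (\<Sum>p\<in>{p. f p = z}. \<mu> p)"

definition srec_mu_feasible ::
  "real \<Rightarrow> real \<Rightarrow> ('x \<times> 'y \<Rightarrow> real) \<Rightarrow> ('x \<times> 'y \<Rightarrow> 'z) \<Rightarrow> 'z \<Rightarrow> (('x \<times> 'y) set \<Rightarrow> real) \<Rightarrow> bool" where
  "srec_mu_feasible eps delta \<mu> f z w \<longleftrightarrow>
     (\<forall>R\<in>rects. 0 \<le> w R) \<and>
     (1 - eps) * mu_z \<mu> f z \<le> (\<Sum>p\<in>{p. f p = z}. \<mu> p * cov w p) \<and>
     (\<forall>p. f p \<noteq> z \<longrightarrow> cov w p \<le> delta) \<and>
     (\<forall>p. cov w p \<le> 1)"

definition srec_z_mu :: "real \<Rightarrow> real \<Rightarrow> ('x \<times> 'y \<Rightarrow> real) \<Rightarrow> ('x \<times> 'y \<Rightarrow> 'z) \<Rightarrow> 'z \<Rightarrow> real" where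
  "srec_z_mu eps delta \<mu> f z = Inf {(\<Sum>R\<in>rects. w R) | w. srec_mu_feasible eps delta \<mu> f z w}"

definition srec_mu :: "real \<Rightarrow> real \<Rightarrow> ('x \<times> 'y \<Rightarrow> real) \<Rightarrow> ('x \<times> 'y \<Rightarrow> 'z) \<Rightarrow> real" where
  "srec_mu eps delta \<mu> f = Sup (range (\<lambda>z. srec_z_mu eps delta \<mu> f z))"

definition prob_dist :: "('a::finite \<Rightarrow> real) \<Rightarrow> bool" where
  "prob_dist \<mu> \<longleftrightarrow> (\<forall>p. 0 \<le> \<mu> p) \<and> (\<Sum>p\<in>UNIV. \<mu> p) = 1"

end

theory Submission
  imports Defs "HOL-Analysis.Analysis"
begin

lemma finite_rects: "finite (rects :: ('x::finite \<times> 'y::finite) set set)"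
  by (rule finite_subset[of _ UNIV]) auto

lemma sing_rect: "{p} \<in> rects"
proof -
  have "{p} = {fst p} \<times> {snd p}" by (cases p) auto
  then show ?thesis unfolding rects_def by blast
qed

lemma cov_lin: "cov (\<lambda>R. s * w R + t * v R) p = s * cov w p + t * cov v p"
  unfolding cov_def by (simp add: sum.distrib sum_distrib_left)

lemma cov_nonneg: "\<forall>R\<in>rects. 0 \<le> w R \<Longrightarrow> 0 \<le> cov w p"
  unfolding cov_def by (rule sum_nonneg) auto

definition w0 :: "('x \<times> 'y \<Rightarrow> 'z) \<Rightarrow> 'z \<Rightarrow> ('x \<times> 'y) set \<Rightarrow> real" where
  "w0 f z R = (if R \<in> (\<lambda>q. {q}) ` {q. f q = z} then 1 else 0)"

lemma cov_w0: "cov (w0 f z) (p :: 'x::finite \<times> 'y::finite) = (if f p = z then 1 else 0)"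
proof -
  have "cov (w0 f z) p = (\<Sum>R\<in>{R\<in>rects. p \<in> R}. if R \<in> (\<lambda>q. {q}) ` {q. f q = z} then 1 else 0)"
    unfolding cov_def w0_def by simp
  also have "\<dots> = (\<Sum>R\<in>{R\<in>{R\<in>rects. p \<in> R}. R \<in> (\<lambda>q. {q}) ` {q. f q = z}}. 1)"
    by (rule sum.inter_filter[symmetric]) (simp add: finite_rects)
  also have "{R\<in>{R\<in>rects. p \<in> R}. R \<in> (\<lambda>q. {q}) ` {q. f q = z}} = (if f p = z then {{p}} else {})"
    using sing_rect[of p] by auto
  finally show ?thesis by simp
qed

lemma w0_nonneg: "\<forall>R\<in>rects. 0 \<le> w0 f z R"
  unfolding w0_def by auto

lemma sum_Z_UNIV:
  fixes g :: "'a::finite \<Rightarrow> real"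
  assumes "\<forall>p. f p \<noteq> z \<longrightarrow> g p = 0"
  shows "sum g {p. f p = z} = sum g UNIV"
  by (rule sum.mono_neutral_left) (use assms in auto)

lemma w0_feasible:
  fixes f :: "'x::finite \<times> 'y::finite \<Rightarrow> 'z"
  assumes "0 \<le> eps" "0 \<le> delta"
  shows "srec_feasible eps delta f z (w0 f z)"
  unfolding srec_feasible_def using assms by (auto simp: cov_w0 w0_nonneg)

lemma w0_mu_feasible:
  fixes f :: "'x::finite \<times> 'y::finite \<Rightarrow> 'z"
  assumes "0 \<le> eps" "0 \<le> delta" "\<forall>p. 0 \<le> \<mu> p"
  shows "srec_mu_feasible eps delta \<mu> f z (w0 f z)"
proof -
  have "(1 - eps) * mu_z \<mu> f z \<le> (\<Sum>p\<in>{p. f p = z}. \<mu> p * cov (w0 f z) p)"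
    unfolding mu_z_def using assms
    by (simp add: cov_w0 sum_distrib_left, intro sum_mono) (simp add: algebra_simps assms(1) assms(3)[rule_format])
  then show ?thesis
    unfolding srec_mu_feasible_def using assms by (auto simp: cov_w0 w0_nonneg)
qed


lemma srec_z_nonneg_set:
  "x \<in> {(\<Sum>R\<in>rects. w R) | w. srec_feasible eps delta f z w} \<Longrightarrow> 0 \<le> x"
  unfolding srec_feasible_def by (auto intro: sum_nonneg)

lemma srec_z_mu_nonneg_set:
  "x \<in> {(\<Sum>R\<in>rects. w R) | w. srec_mu_feasible eps delta \<mu> f z w} \<Longrightarrow> 0 \<le> x"
  unfolding srec_mu_feasible_def by (auto intro: sum_nonneg)

lemma srec_z_le_feasible:
  "srec_feasible eps delta f z w \<Longrightarrow> srec_z eps delta f z \<le> (\<Sum>R\<in>rects. w R)"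
  unfolding srec_z_def
proof (rule cInf_lower)
  show "bdd_below {(\<Sum>R\<in>rects. w R) | w. srec_feasible eps delta f z w}"
    by (rule bdd_belowI[of _ 0]) (rule srec_z_nonneg_set)
qed auto

lemma duality:
  fixes f :: "'x::finite \<times> 'y::finite \<Rightarrow> 'z" and eps delta :: real
  assumes eps: "0 < eps" and dl: "0 \<le> delta"
  shows "\<exists>\<mu>. prob_dist \<mu> \<and> srec_z eps delta f z \<le> srec_z_mu eps delta \<mu> f z"
proof (cases "srec_z eps delta f z \<le> 0")
  case True
  define \<mu> :: "'x \<times> 'y \<Rightarrow> real" where "\<mu> = (\<lambda>p. 1 / real CARD('x \<times> 'y))"
  have pd: "prob_dist \<mu>" unfolding prob_dist_def \<mu>_def by simp
  have "0 \<le> srec_z_mu eps delta \<mu> f z"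
    unfolding srec_z_mu_def
    apply (rule cInf_greatest)
    using w0_mu_feasible[of eps delta \<mu> f z] eps dl pd[unfolded prob_dist_def]
     apply auto[1]
    by (rule srec_z_mu_nonneg_set)
  then show ?thesis using True pd by force
next
  case False
  define opt where "opt = srec_z eps delta f z"
  have optpos: "0 < opt" using False opt_def by simp
  define P where "P w \<longleftrightarrow> (\<forall>R\<in>rects. 0 \<le> w R) \<and> (\<forall>p. f p \<noteq> z \<longrightarrow> cov w p \<le> delta) \<and> (\<forall>p. cov w p \<le> 1)"
    for w :: "('x \<times> 'y) set \<Rightarrow> real"
  define C where "C = {w. P w \<and> sum w rects < opt}"
  define T :: "(('x \<times> 'y) set \<Rightarrow> real) \<Rightarrow> real ^ ('x \<times> 'y)" where "T w = (\<chi> p. cov w p)" for w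
  define S where "S = T ` C"
  define D :: "(real ^ ('x \<times> 'y)) set" where "D = {v. \<forall>p. f p = z \<longrightarrow> 1 - eps \<le> v $ p}"
  have PC: "P (\<lambda>R. u * w1 R + v * w2 R)" if "P w1" "P w2" "0 \<le> u" "0 \<le> v" "u + v = 1" for w1 w2 u v
  proof -
    have a: "\<forall>R\<in>rects. 0 \<le> u * w1 R + v * w2 R" using that unfolding P_def by auto
    have b: "cov (\<lambda>R. u * w1 R + v * w2 R) p \<le> delta" if "f p \<noteq> z" for p
    proof -
      have "cov w1 p \<le> delta" "cov w2 p \<le> delta"
        using \<open>P w1\<close> \<open>P w2\<close> that unfolding P_def by blast+
      then have "u * cov w1 p + v * cov w2 p \<le> u * delta + v * delta"
        using \<open>0 \<le> u\<close> \<open>0 \<le> v\<close>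
        by (intro add_mono mult_left_mono) auto
      moreover have "u * delta + v * delta = delta"
        by (metis \<open>u + v = 1\<close> distrib_right mult_1)
      ultimately show ?thesis by (simp add: cov_lin)
    qed
    have c: "cov (\<lambda>R. u * w1 R + v * w2 R) p \<le> 1" for p
    proof -
      have "cov w1 p \<le> 1" "cov w2 p \<le> 1"
        using \<open>P w1\<close> \<open>P w2\<close> unfolding P_def by blast+
      then have "u * cov w1 p + v * cov w2 p \<le> u * 1 + v * 1"
        using \<open>0 \<le> u\<close> \<open>0 \<le> v\<close>
        by (intro add_mono mult_left_mono) auto
      then show ?thesis using \<open>u + v = 1\<close> by (simp add: cov_lin algebra_simps)
    qed
    show ?thesis using a b c unfolding P_def by blast
  qed
  have convS: "convex S"
    unfolding convex_def S_def
  proof (intro ballI allI impI)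
    fix x y u v assume xy: "x \<in> T ` C" "y \<in> T ` C" and uv: "0 \<le> u" "0 \<le> v" "u + v = (1::real)"
    then obtain w1 w2 where w: "w1 \<in> C" "w2 \<in> C" "x = T w1" "y = T w2" by blast
    define w where "w = (\<lambda>R. u * w1 R + v * w2 R)"
    have "P w" unfolding w_def using PC w uv unfolding C_def by blast
    moreover have "sum w rects < opt"
    proof -
      have sw: "sum w rects = u * sum w1 rects + v * sum w2 rects"
        unfolding w_def by (simp add: sum.distrib sum_distrib_left)
      have e: "u * opt + v * opt = opt" by (metis \<open>u + v = 1\<close> distrib_right mult_1)
      have "u * sum w1 rects + v * sum w2 rects < u * opt + v * opt"
      proof (cases "u = 0")
        case True then show ?thesis using w uv unfolding C_def by auto
      next
        case False then have "0 < u" using uv by simp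
        then have "u * sum w1 rects < u * opt" using w unfolding C_def by auto
        moreover have "v * sum w2 rects \<le> v * opt" using w uv unfolding C_def by (intro mult_left_mono) auto
        ultimately show ?thesis by simp
      qed
      then show ?thesis using sw e by simp
    qed
    ultimately have "w \<in> C" unfolding C_def by blast
    moreover have "u *\<^sub>R x + v *\<^sub>R y = T w"
      unfolding w T_def w_def by (simp add: vec_eq_iff cov_lin)
    ultimately show "u *\<^sub>R x + v *\<^sub>R y \<in> T ` C" by blast
  qed
  have convD: "convex D"
    unfolding convex_def D_def
  proof (intro ballI allI impI CollectI)
    fix x y :: "real ^ ('x \<times> 'y)" and u v :: real and p
    assume xy: "x \<in> {v. \<forall>p. f p = z \<longrightarrow> 1 - eps \<le> v $ p}" "y \<in> {v. \<forall>p. f p = z \<longrightarrow> 1 - eps \<le> v $ p}"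
      and uv: "0 \<le> u" "0 \<le> v" "u + v = 1" and fp: "f p = z"
    have "1 - eps \<le> x $ p" "1 - eps \<le> y $ p" using xy fp by blast+
    then have "u * (1 - eps) + v * (1 - eps) \<le> u * x $ p + v * y $ p"
      using uv by (intro add_mono mult_left_mono) auto
    moreover have "u * (1 - eps) + v * (1 - eps) = 1 - eps"
      by (metis \<open>u + v = 1\<close> distrib_right mult_1)
    ultimately show "1 - eps \<le> (u *\<^sub>R x + v *\<^sub>R y) $ p" by simp
  qed
  have P0: "P (\<lambda>R. 0)" unfolding P_def cov_def using dl by simp
  have "(\<lambda>R. 0) \<in> C" unfolding C_def using P0 optpos by simp
  then have Sne: "S \<noteq> {}" unfolding S_def by blast
  have one_D: "(\<chi> p. 1) \<in> D" unfolding D_def using eps by simp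
  then have Dne: "D \<noteq> {}" by blast
  have disj: "S \<inter> D = {}"
  proof (rule ccontr)
    assume "S \<inter> D \<noteq> {}"
    then obtain w where w: "w \<in> C" "T w \<in> D" unfolding S_def by blast
    then have "srec_feasible eps delta f z w"
      unfolding srec_feasible_def C_def P_def D_def T_def by auto
    then have "opt \<le> sum w rects" unfolding opt_def by (rule srec_z_le_feasible)
    then show False using w unfolding C_def by simp
  qed
  obtain a b where ab: "a \<noteq> 0" "\<forall>x\<in>S. inner a x \<le> b" "\<forall>x\<in>D. b \<le> inner a x"
    using separating_hyperplane_sets[OF convS convD Sne Dne disj] by blast
  define one :: "real ^ ('x \<times> 'y)" where "one = (\<chi> p. 1)"
  have inner_shift: "inner a (one + t *\<^sub>R axis p 1) = inner a one + t * a $ p" for t p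
    by (simp add: inner_add_right inner_axis)
  have shiftD: "one + t *\<^sub>R axis p 1 \<in> D" if "f p \<noteq> z \<or> 0 \<le> t" for t p
    using that eps unfolding D_def one_def by (auto simp: axis_def)
  have bone: "b \<le> inner a one" using ab one_D one_def by simp
  have off: "a $ p = 0" if "f p \<noteq> z" for p
  proof (rule ccontr)
    assume ne: "a $ p \<noteq> 0"
    define t where "t = (b - inner a one - 1) / a $ p"
    have "b \<le> inner a (one + t *\<^sub>R axis p 1)" using ab(3) shiftD[of p t] that by blast
    then have "b \<le> inner a one + t * a $ p" by (simp only: inner_shift)
    also have "\<dots> = b - 1" unfolding t_def using ne by simp
    finally show False by simp
  qed
  have on: "0 \<le> a $ p" for p
  proof (rule ccontr)
    assume ne: "\<not> 0 \<le> a $ p"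
    define t where "t = (b - inner a one - 1) / a $ p"
    have "0 \<le> t" unfolding t_def using ne bone by (simp add: divide_nonpos_neg)
    then have "b \<le> inner a (one + t *\<^sub>R axis p 1)" using ab(3) shiftD[of p t] by blast
    then have "b \<le> inner a one + t * a $ p" by (simp only: inner_shift)
    also have "\<dots> = b - 1" unfolding t_def using ne by simp
    finally show False by simp
  qed
  define A where "A = sum (\<lambda>p. a $ p) UNIV"
  have Apos: "0 < A"
  proof -
    obtain p where "a $ p \<noteq> 0" using ab(1) by (metis vec_eq_iff zero_index)
    then have "0 < a $ p" using on[of p] by simp
    moreover have "a $ p \<le> A" unfolding A_def by (rule member_le_sum) (auto simp: on)
    ultimately show ?thesis by simp
  qed
  have innerT: "inner a (T w) = (\<Sum>p\<in>UNIV. a $ p * cov w p)" for w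
    unfolding T_def inner_vec_def by simp
  have bA: "b \<le> (1 - eps) * A"
  proof -
    have "(\<chi> p. 1 - eps) \<in> D" unfolding D_def by simp
    then have "b \<le> inner a (\<chi> p. 1 - eps)" using ab by blast
    also have "\<dots> = (1 - eps) * A" unfolding inner_vec_def A_def by (simp add: sum_distrib_left algebra_simps)
    finally show ?thesis .
  qed
  define N where "N = sum (w0 f z) rects"
  have K: "opt \<le> sum w rects" if Pw: "P w" and cw: "(1 - eps) * A \<le> (\<Sum>p\<in>UNIV. a $ p * cov w p)" for w
  proof (rule ccontr)
    assume "\<not> opt \<le> sum w rects"
    define d where "d = opt - sum w rects"
    have dpos: "0 < d" using \<open>\<not> opt \<le> sum w rects\<close> d_def by simp
    define s where "s = d / (\<bar>N - sum w rects\<bar> + d + 1)"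
    have s0: "0 < s" unfolding s_def using dpos by simp
    have s1: "s < 1" unfolding s_def using dpos by simp
    have sd: "s * (N - sum w rects) < d"
    proof -
      have "s * (N - sum w rects) \<le> s * \<bar>N - sum w rects\<bar>" using s0 by (intro mult_left_mono) auto
      also have "\<dots> < d" unfolding s_def using dpos
        by (simp add: field_simps add_pos_pos mult_pos_pos)
      finally show ?thesis .
    qed
    define ws where "ws = (\<lambda>R. (1 - s) * w R + s * w0 f z R)"
    have Pw0: "P (w0 f z)" unfolding P_def using dl by (auto simp: w0_nonneg cov_w0)
    have Pws: "P ws" unfolding ws_def using PC[OF Pw Pw0] s0 s1 by simp
    have "sum ws rects = (1 - s) * sum w rects + s * N"
      unfolding ws_def N_def by (simp add: sum.distrib sum_distrib_left)
    also have "\<dots> < opt" using sd d_def by (simp add: algebra_simps)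
    finally have "ws \<in> C" using Pws unfolding C_def by simp
    then have "inner a (T ws) \<le> b" using ab unfolding S_def by blast
    moreover have "inner a (T ws) = (1 - s) * (\<Sum>p\<in>UNIV. a $ p * cov w p) + s * A"
    proof -
      have "a $ p * cov ws p = (1 - s) * (a $ p * cov w p) + s * a $ p" for p
      proof -
        have ce: "cov ws p = (1 - s) * cov w p + s * (if f p = z then 1 else 0)"
          unfolding ws_def cov_lin cov_w0 ..
        show ?thesis unfolding ce using off[of p] by (cases "f p = z") (simp_all add: algebra_simps)
      qed
      then show ?thesis unfolding innerT A_def
        by (simp add: sum.distrib sum_distrib_left)
    qed
    moreover have "(1 - s) * ((1 - eps) * A) \<le> (1 - s) * (\<Sum>p\<in>UNIV. a $ p * cov w p)"
      using cw s1 by (intro mult_left_mono) auto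
    moreover have "(1 - eps) * A < (1 - s) * ((1 - eps) * A) + s * A"
    proof -
      have "0 < s * (eps * A)" using s0 eps Apos by simp
      then show ?thesis by (simp add: algebra_simps)
    qed
    ultimately show False using bA by linarith
  qed
  define \<mu> where "\<mu> p = a $ p / A" for p
  have pd: "prob_dist \<mu>" unfolding prob_dist_def \<mu>_def using on Apos
    by (simp add: sum_divide_distrib[symmetric] A_def)
  have "opt \<le> srec_z_mu eps delta \<mu> f z"
    unfolding srec_z_mu_def
  proof (rule cInf_greatest)
    show "{(\<Sum>R\<in>rects. w R) | w. srec_mu_feasible eps delta \<mu> f z w} \<noteq> {}"
      using w0_mu_feasible[of eps delta \<mu> f z] eps dl pd[unfolded prob_dist_def] by auto
  next
    fix x assume "x \<in> {(\<Sum>R\<in>rects. w R) | w. srec_mu_feasible eps delta \<mu> f z w}"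
    then obtain w where x: "x = sum w rects" and fw: "srec_mu_feasible eps delta \<mu> f z w" by auto
    have Pw: "P w" using fw unfolding srec_mu_feasible_def P_def by auto
    have mz: "mu_z \<mu> f z = 1"
    proof -
      have "mu_z \<mu> f z = sum \<mu> UNIV" unfolding mu_z_def
        by (rule sum_Z_UNIV) (simp add: \<mu>_def off)
      then show ?thesis using pd unfolding prob_dist_def by simp
    qed
    have "(\<Sum>p\<in>{p. f p = z}. \<mu> p * cov w p) = (\<Sum>p\<in>UNIV. \<mu> p * cov w p)"
      by (rule sum_Z_UNIV) (simp add: \<mu>_def off)
    also have "\<dots> = (\<Sum>p\<in>UNIV. a $ p * cov w p) / A"
      unfolding \<mu>_def by (simp add: sum_divide_distrib)
    finally have "1 - eps \<le> (\<Sum>p\<in>UNIV. a $ p * cov w p) / A"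
      using fw mz unfolding srec_mu_feasible_def by simp
    then have "(1 - eps) * A \<le> (\<Sum>p\<in>UNIV. a $ p * cov w p)" using Apos by (simp add: field_simps)
    then show "opt \<le> x" using K[OF Pw] x by simp
  qed
  then show ?thesis using pd opt_def by blast
qed


definition G :: "real \<Rightarrow> real \<Rightarrow> ('x \<times> 'y \<Rightarrow> bool) \<Rightarrow> real" where
  "G eps delta Q = Inf {(\<Sum>R\<in>rects. w R) | w. (\<forall>R\<in>rects. 0 \<le> w R) \<and>
     (\<forall>p. Q p \<longrightarrow> 1 - eps \<le> cov w p) \<and> (\<forall>p. \<not> Q p \<longrightarrow> cov w p \<le> delta) \<and> (\<forall>p. cov w p \<le> 1)}"

lemma srec_z_G: "srec_z eps delta f z = G eps delta (\<lambda>p. f p = z)"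
  unfolding srec_z_def G_def srec_feasible_def by simp

lemma finite_range_srec_z:
  fixes f :: "'x::finite \<times> 'y::finite \<Rightarrow> 'z"
  shows "finite (range (\<lambda>z. srec_z eps delta f z))"
proof -
  have "range (\<lambda>z. srec_z eps delta f z) \<subseteq> range (G eps delta :: ('x \<times> 'y \<Rightarrow> bool) \<Rightarrow> real)"
    unfolding srec_z_G by blast
  moreover have "finite (range (G eps delta :: ('x \<times> 'y \<Rightarrow> bool) \<Rightarrow> real))" by simp
  ultimately show ?thesis by (rule finite_subset)
qed

lemma mu_le:
  fixes f :: "'x::finite \<times> 'y::finite \<Rightarrow> 'z"
  assumes eps: "0 \<le> eps" and dl: "0 \<le> delta" and pd: "prob_dist \<mu>"
  shows "srec_z_mu eps delta \<mu> f z \<le> srec_z eps delta f z"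
  unfolding srec_z_mu_def srec_z_def
proof (rule cInf_superset_mono)
  show "{(\<Sum>R\<in>rects. w R) | w. srec_feasible eps delta f z w} \<noteq> {}"
    using w0_feasible[OF eps dl, of f z] by blast
  show "bdd_below {(\<Sum>R\<in>rects. w R) | w. srec_mu_feasible eps delta \<mu> f z w}"
    by (rule bdd_belowI[of _ 0]) (rule srec_z_mu_nonneg_set)
  show "{(\<Sum>R\<in>rects. w R) | w. srec_feasible eps delta f z w}
      \<subseteq> {(\<Sum>R\<in>rects. w R) | w. srec_mu_feasible eps delta \<mu> f z w}"
  proof
    fix x assume "x \<in> {(\<Sum>R\<in>rects. w R) | w. srec_feasible eps delta f z w}"
    then obtain w where x: "x = sum w rects" and fw: "srec_feasible eps delta f z w" by auto
    have "(1 - eps) * mu_z \<mu> f z \<le> (\<Sum>p\<in>{p. f p = z}. \<mu> p * cov w p)"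
      unfolding mu_z_def sum_distrib_left
    proof (rule sum_mono)
      fix p assume "p \<in> {p. f p = z}"
      then have "1 - eps \<le> cov w p" using fw unfolding srec_feasible_def by blast
      moreover have "0 \<le> \<mu> p" using pd unfolding prob_dist_def by blast
      ultimately show "(1 - eps) * \<mu> p \<le> \<mu> p * cov w p"
        by (metis mult.commute mult_left_mono)
    qed
    then have "srec_mu_feasible eps delta \<mu> f z w"
      using fw unfolding srec_feasible_def srec_mu_feasible_def by blast
    then show "x \<in> {(\<Sum>R\<in>rects. w R) | w. srec_mu_feasible eps delta \<mu> f z w}" using x by blast
  qed
qed

theorem mainTheorem3:
  fixes f :: "'x::finite \<times> 'y::finite \<Rightarrow> 'z" and eps delta :: real
  assumes "0 < eps" "eps < 1" "0 < delta" "delta < 1"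
  shows "(\<exists>\<mu>. prob_dist \<mu> \<and> srec_mu eps delta \<mu> f = srec eps delta f) \<and>
         (\<forall>\<mu>. prob_dist \<mu> \<longrightarrow> srec_mu eps delta \<mu> f \<le> srec eps delta f)"
proof -
  have fin: "finite (range (\<lambda>z. srec_z eps delta f z))" by (rule finite_range_srec_z)
  have bdd: "bdd_above (range (\<lambda>z. srec_z eps delta f z))" using fin by (rule bdd_above_finite)
  have upper: "srec_mu eps delta \<mu> f \<le> srec eps delta f" if pd: "prob_dist \<mu>" for \<mu>
    unfolding srec_mu_def srec_def
  proof (rule cSup_least)
    show "range (\<lambda>z. srec_z_mu eps delta \<mu> f z) \<noteq> {}" by simp
    fix x assume "x \<in> range (\<lambda>z. srec_z_mu eps delta \<mu> f z)"
    then obtain z where x: "x = srec_z_mu eps delta \<mu> f z" by blast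
    have "x \<le> srec_z eps delta f z" using mu_le[of eps delta \<mu> f z] assms pd x by simp
    also have "\<dots> \<le> Sup (range (\<lambda>z. srec_z eps delta f z))"
      by (rule cSup_upper[OF _ bdd]) simp
    finally show "x \<le> Sup (range (\<lambda>z. srec_z eps delta f z))" .
  qed
  have "srec eps delta f \<in> range (\<lambda>z. srec_z eps delta f z)"
    unfolding srec_def using cSup_eq_Max[OF fin] Max_in[OF fin] by simp
  then obtain z where z: "srec eps delta f = srec_z eps delta f z" by blast
  obtain \<mu> where pd: "prob_dist \<mu>" and le: "srec_z eps delta f z \<le> srec_z_mu eps delta \<mu> f z"
    using duality[of eps delta f z] assms by auto
  have bdd2: "bdd_above (range (\<lambda>z. srec_z_mu eps delta \<mu> f z))"
  proof (rule bdd_aboveI[of _ "srec eps delta f"])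
    fix x assume "x \<in> range (\<lambda>z. srec_z_mu eps delta \<mu> f z)"
    then obtain z' where x: "x = srec_z_mu eps delta \<mu> f z'" by blast
    have "x \<le> srec_z eps delta f z'" using mu_le[of eps delta \<mu> f z'] assms pd x by simp
    also have "\<dots> \<le> srec eps delta f" unfolding srec_def
      by (rule cSup_upper[OF _ bdd]) simp
    finally show "x \<le> srec eps delta f" .
  qed
  have "srec_z_mu eps delta \<mu> f z \<le> srec_mu eps delta \<mu> f"
    unfolding srec_mu_def by (rule cSup_upper[OF _ bdd2]) simp
  then have "srec eps delta f \<le> srec_mu eps delta \<mu> f" using z le by simp
  then have "srec_mu eps delta \<mu> f = srec eps delta f" using upper[OF pd] by simp
  then show ?thesis using pd upper by blast
qed

end
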